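(* Let $a<c<b<d$ be integers, so that the finite arcs $(a,b)$ and $(c,d)$ cross. Then there are non-split short exact sequences in $\mathcal{C}_2$ \[ 0\to(a,b)\xrightarrow{f}(c,b)\oplus(a,d)\xrightarrow{g}(c,d)\to0,\qquad 0\to(c,d)\xrightarrow{f'}(a,c)\oplus(b,d)\xrightarrow{g'}(a,b)\to0. \]
   Context: Let $R=\mathbb{C}[x,y]/(x^2)$, graded with $\deg x=1$, $\deg y=-1$; $M(j)_n=M_{j+n}$. $\mathcal{C}_2$ is the exact category of finitely generated $\mathbb{Z}$-graded maximal Cohen–Macaulay $R$-modules with degree-preserving morphisms. An arc is a pair $(a,b)$ with $a\in\mathbb{Z}\cup\{-\infty\}$, $b\in\mathbb{Z}$, $a<b$; a finite arc $(a,b)$ ($a\in\mathbb{Z}$) denotes the module $(x,y^{b-a-1})(1-b)$ (where $(x,y^0)=R$), and an infinite arc $(-\infty,b)$ denotes $\mathbb{C}[y](-b)=(R/(x))(-b)$. *)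

theory Defs
  imports "HOL-Computational_Algebra.Polynomial"
begin

text \<open>
  The ring R = C[x,y]/(x^2).  An element p(y) + x q(y) of R is represented
  by the pair (p, q) of complex polynomials in y.  Grading: deg x = 1, deg y = -1.
\<close>

type_synonym relt = "complex poly \<times> complex poly"

definition radd :: "relt \<Rightarrow> relt \<Rightarrow> relt" where
  "radd r s = (fst r + fst s, snd r + snd s)"

definition rmul :: "relt \<Rightarrow> relt \<Rightarrow> relt" where
  "rmul r s = (fst r * fst s, fst r * snd s + snd r * fst s)"

definition rsmul :: "complex \<Rightarrow> relt \<Rightarrow> relt" where
  "rsmul c r = (smult c (fst r), smult c (snd r))"

definition rx :: relt where "rx = (0, 1)"
definition ry :: relt where "ry = ([:0, 1:], 0)"
definition rypow :: "nat \<Rightarrow> relt" where "rypow k = (monom 1 k, 0)"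

definition R_hom :: "int \<Rightarrow> relt set" where
  "R_hom n = {r. (\<forall>i. coeff (fst r) i \<noteq> 0 \<longrightarrow> - int i = n)
              \<and> (\<forall>i. coeff (snd r) i \<noteq> 0 \<longrightarrow> 1 - int i = n)}"

definition ideal_xy :: "nat \<Rightarrow> relt set" where
  "ideal_xy k = {radd (rmul r rx) (rmul s (rypow k)) | r s. True}"

text \<open>
  A graded module is given
  by its homogeneous components (all living in an ambient type 'e), C-vector space
  operations, and the actions of x (degree +1) and y (degree -1).
\<close>
record 'e gmod =
  comp :: "int \<Rightarrow> 'e set"
  gadd :: "'e \<Rightarrow> 'e \<Rightarrow> 'e"
  gsmul :: "complex \<Rightarrow> 'e \<Rightarrow> 'e"
  gzero :: 'e
  actx :: "'e \<Rightarrow> 'e"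
  acty :: "'e \<Rightarrow> 'e"

definition shifted_submod :: "relt set \<Rightarrow> int \<Rightarrow> relt gmod" where
  "shifted_submod I j = \<lparr> comp = (\<lambda>n. I \<inter> R_hom (j + n)), gadd = radd, gsmul = rsmul,
       gzero = (0, 0), actx = rmul rx, acty = rmul ry \<rparr>"

text \<open>The finite arc (a,b), a < b: the module (x, y^(b-a-1))(1-b).\<close>
definition arc :: "int \<Rightarrow> int \<Rightarrow> relt gmod" where
  "arc a b = shifted_submod (ideal_xy (nat (b - a - 1))) (1 - b)"

definition dsum :: "'a gmod \<Rightarrow> 'b gmod \<Rightarrow> ('a \<times> 'b) gmod" where
  "dsum M N = \<lparr> comp = (\<lambda>n. comp M n \<times> comp N n),
       gadd = (\<lambda>u v. (gadd M (fst u) (fst v), gadd N (snd u) (snd v))),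
       gsmul = (\<lambda>c u. (gsmul M c (fst u), gsmul N c (snd u))),
       gzero = (gzero M, gzero N),
       actx = (\<lambda>u. (actx M (fst u), actx N (snd u))),
       acty = (\<lambda>u. (acty M (fst u), acty N (snd u))) \<rparr>"

definition gmod_hom :: "'a gmod \<Rightarrow> 'b gmod \<Rightarrow> (int \<Rightarrow> 'a \<Rightarrow> 'b) \<Rightarrow> bool" where
  "gmod_hom M N f \<longleftrightarrow>
     (\<forall>n. \<forall>m\<in>comp M n. f n m \<in> comp N n) \<and>
     (\<forall>n. \<forall>m1\<in>comp M n. \<forall>m2\<in>comp M n. f n (gadd M m1 m2) = gadd N (f n m1) (f n m2)) \<and>
     (\<forall>n c. \<forall>m\<in>comp M n. f n (gsmul M c m) = gsmul N c (f n m)) \<and>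
     (\<forall>n. \<forall>m\<in>comp M n. f (n + 1) (actx M m) = actx N (f n m)) \<and>
     (\<forall>n. \<forall>m\<in>comp M n. f (n - 1) (acty M m) = acty N (f n m))"

definition short_exact :: "'a gmod \<Rightarrow> 'b gmod \<Rightarrow> 'c gmod \<Rightarrow>
    (int \<Rightarrow> 'a \<Rightarrow> 'b) \<Rightarrow> (int \<Rightarrow> 'b \<Rightarrow> 'c) \<Rightarrow> bool" where
  "short_exact A B C f g \<longleftrightarrow> gmod_hom A B f \<and> gmod_hom B C g \<and>
     (\<forall>n. inj_on (f n) (comp A n)) \<and>
     (\<forall>n. {b \<in> comp B n. g n b = gzero C} = f n ` comp A n) \<and>
     (\<forall>n. g n ` comp B n = comp C n)"

definition ses_splits :: "'a gmod \<Rightarrow> 'b gmod \<Rightarrow> (int \<Rightarrow> 'a \<Rightarrow> 'b) \<Rightarrow> bool" where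
  "ses_splits A B f \<longleftrightarrow> (\<exists>r. gmod_hom B A r \<and> (\<forall>n. \<forall>m\<in>comp A n. r n (f n m) = m))"

end

theory Submission
  imports Defs
begin


definition el :: "int \<Rightarrow> int \<Rightarrow> complex \<Rightarrow> complex \<Rightarrow> relt" where
  "el b n \<alpha> \<beta> = (monom \<alpha> (nat (b - 1 - n)), monom \<beta> (nat (b - n)))"

definition ca :: "int \<Rightarrow> int \<Rightarrow> relt \<Rightarrow> complex" where
  "ca b n m = coeff (fst m) (nat (b - 1 - n))"
definition cb :: "int \<Rightarrow> int \<Rightarrow> relt \<Rightarrow> complex" where
  "cb b n m = coeff (snd m) (nat (b - n))"

lemma ca_el [simp]: "ca b n (el b n \<alpha> \<beta>) = \<alpha>" by (simp add: ca_def el_def)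
lemma cb_el [simp]: "cb b n (el b n \<alpha> \<beta>) = \<beta>" by (simp add: cb_def el_def)
lemma el_eq [simp]: "el b n \<alpha> \<beta> = el b n \<alpha>' \<beta>' \<longleftrightarrow> \<alpha> = \<alpha>' \<and> \<beta> = \<beta>'"
  by (simp add: el_def)
lemma el_zero [simp]: "el b n 0 0 = (0, 0)" by (simp add: el_def)
lemma el_eq_zero [simp]: "el b n \<alpha> \<beta> = (0, 0) \<longleftrightarrow> \<alpha> = 0 \<and> \<beta> = 0"
  by (simp add: el_def)
lemma radd_el [simp]: "radd (el b n \<alpha> \<beta>) (el b n \<alpha>' \<beta>') = el b n (\<alpha> + \<alpha>') (\<beta> + \<beta>')"
  by (simp add: el_def radd_def add_monom)
lemma rsmul_el [simp]: "rsmul c (el b n \<alpha> \<beta>) = el b n (c * \<alpha>) (c * \<beta>)"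
  by (simp add: el_def rsmul_def smult_monom)
lemma rx_el [simp]: "rmul rx (el b n \<alpha> \<beta>) = el b (n + 1) 0 \<alpha>"
  by (simp add: el_def rmul_def rx_def algebra_simps)

lemma ymul_monom: "[:0, 1:] * monom (a::complex) k = monom a (Suc k)"
  by (simp add: monom_Suc monom_0 pCons_eq_iff)

lemma pCons_monom: "n < b \<Longrightarrow> pCons 0 (monom \<alpha> (nat (b - 1 - n))) = monom \<alpha> (nat (b - n))"
proof -
  assume "n < b"
  then have "nat (b - n) = Suc (nat (b - 1 - n))" by simp
  then show ?thesis by (simp add: monom_Suc)
qed

lemma pCons_monom2: "n \<le> b \<Longrightarrow> pCons 0 (monom \<beta> (nat (b - n))) = monom \<beta> (nat (b - (n - 1)))"
proof -
  assume "n \<le> b"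
  then have "nat (b - (n - 1)) = Suc (nat (b - n))" by simp
  then show ?thesis by (simp add: monom_Suc)
qed

lemma ry_el:
  assumes "\<alpha> = 0 \<or> n < b" "\<beta> = 0 \<or> n \<le> b"
  shows "rmul ry (el b n \<alpha> \<beta>) = el b (n - 1) \<alpha> \<beta>"
proof -
  have 1: "[:0, 1:] * monom \<alpha> (nat (b - 1 - n)) = monom \<alpha> (nat (b - 1 - (n - 1)))"
    using assms(1) by (auto simp: ymul_monom monom_Suc pCons_monom intro: arg_cong[where f="monom \<alpha>"])
  have 2: "[:0, 1:] * monom \<beta> (nat (b - n)) = monom \<beta> (nat (b - (n - 1)))"
    using assms(2) by (auto simp: ymul_monom monom_Suc pCons_monom2 intro: arg_cong[where f="monom \<beta>"])
  show ?thesis using 1 2 by (simp add: el_def rmul_def ry_def)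
qed

lemma ry_zero [simp]: "rmul ry (0, 0) = (0, 0)" by (simp add: rmul_def ry_def)

lemma ideal_xy_iff: "m \<in> ideal_xy k \<longleftrightarrow> monom 1 k dvd fst m"
proof
  assume "m \<in> ideal_xy k"
  then show "monom 1 k dvd fst m"
    by (auto simp: ideal_xy_def radd_def rmul_def rx_def rypow_def)
next
  assume "monom 1 k dvd fst m"
  then obtain t where t: "fst m = monom 1 k * t" by (auto elim: dvdE)
  have "m = radd (rmul (snd m, 0) rx) (rmul (t, 0) (rypow k))"
    using t by (cases m) (simp add: radd_def rmul_def rx_def rypow_def mult.commute)
  then show "m \<in> ideal_xy k" unfolding ideal_xy_def by blast
qed

lemma arc_ops [simp]:
  "gadd (arc a b) = radd" "gsmul (arc a b) = rsmul" "gzero (arc a b) = (0, 0)"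
  "actx (arc a b) = rmul rx" "acty (arc a b) = rmul ry"
  by (simp_all add: arc_def shifted_submod_def)

lemma arc_comp_raw: "comp (arc a b) n = ideal_xy (nat (b - a - 1)) \<inter> R_hom (1 - b + n)"
  by (simp add: arc_def shifted_submod_def)

lemma arc_compI:
  assumes "a < b" "a < n \<longrightarrow> \<alpha> = 0" "b < n \<longrightarrow> \<beta> = 0"
  shows "el b n \<alpha> \<beta> \<in> comp (arc a b) n"
proof -
  have "monom 1 (nat (b - a - 1)) dvd monom \<alpha> (nat (b - 1 - n))"
  proof (cases "\<alpha> = 0")
    case False
    then have "n \<le> a" using assms by auto
    then have "monom \<alpha> (nat (b - 1 - n)) = monom 1 (nat (b - a - 1)) * monom \<alpha> (nat (a - n))"
      using assms by (simp add: mult_monom) (rule arg_cong[where f="monom \<alpha>"], simp)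
    then show ?thesis by simp
  qed simp
  moreover have "el b n \<alpha> \<beta> \<in> R_hom (1 - b + n)"
    using assms by (auto simp: R_hom_def el_def split: if_splits)
  ultimately show ?thesis by (simp add: arc_comp_raw ideal_xy_iff el_def)
qed

lemma arc_compE:
  assumes "a < b" "m \<in> comp (arc a b) n"
  obtains \<alpha> \<beta> where "m = el b n \<alpha> \<beta>" "a < n \<longrightarrow> \<alpha> = 0" "b < n \<longrightarrow> \<beta> = 0"
proof -
  obtain P Q where m: "m = (P, Q)" by (cases m)
  have dv: "monom 1 (nat (b - a - 1)) dvd P" and h: "(P, Q) \<in> R_hom (1 - b + n)"
    using assms m by (auto simp: arc_comp_raw ideal_xy_iff)
  have hP: "\<And>i. coeff P i \<noteq> 0 \<Longrightarrow> int i = b - 1 - n"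
    and hQ: "\<And>i. coeff Q i \<noteq> 0 \<Longrightarrow> int i = b - n"
    using h by (auto simp: R_hom_def)
  define \<alpha> where "\<alpha> = coeff P (nat (b - 1 - n))"
  define \<beta> where "\<beta> = coeff Q (nat (b - n))"
  have P: "P = monom \<alpha> (nat (b - 1 - n))"
  proof (rule poly_eqI)
    fix i show "coeff P i = coeff (monom \<alpha> (nat (b - 1 - n))) i"
      using hP[of i] hP[of "nat (b - 1 - n)"] unfolding \<alpha>_def by (cases "coeff P i = 0") auto
  qed
  have Q: "Q = monom \<beta> (nat (b - n))"
  proof (rule poly_eqI)
    fix i show "coeff Q i = coeff (monom \<beta> (nat (b - n))) i"
      using hQ[of i] hQ[of "nat (b - n)"] unfolding \<beta>_def by (cases "coeff Q i = 0") auto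
  qed
  have "a < n \<longrightarrow> \<alpha> = 0"
  proof
    assume an: "a < n"
    show "\<alpha> = 0"
    proof (rule ccontr)
      assume a0: "\<alpha> \<noteq> 0"
      then have "int (nat (b - 1 - n)) = b - 1 - n" using hP \<alpha>_def by blast
      moreover have "degree (monom (1::complex) (nat (b - a - 1))) \<le> degree (monom \<alpha> (nat (b - 1 - n)))"
        using dv P a0 by (intro dvd_imp_degree_le) auto
      ultimately show False using an a0 assms(1) nat_le_eq_zle[of "b-a-1" "b-1-n"]
        by (simp add: degree_monom_eq split: if_splits)
    qed
  qed
  moreover have "b < n \<longrightarrow> \<beta> = 0"
  proof
    assume "b < n"
    then show "\<beta> = 0" using hQ[of "nat (b - n)"] unfolding \<beta>_def by fastforce
  qed
  ultimately show ?thesis using that m P Q el_def by auto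
qed



lemma dsum_simps [simp]:
  "comp (dsum M N) n = comp M n \<times> comp N n"
  "gadd (dsum M N) u v = (gadd M (fst u) (fst v), gadd N (snd u) (snd v))"
  "gsmul (dsum M N) c u = (gsmul M c (fst u), gsmul N c (snd u))"
  "gzero (dsum M N) = (gzero M, gzero N)"
  "actx (dsum M N) u = (actx M (fst u), actx N (snd u))"
  "acty (dsum M N) u = (acty M (fst u), acty N (snd u))"
  by (simp_all add: dsum_def)

lemma rx_zero [simp]: "rmul rx (0, 0) = (0, 0)" by (simp add: rmul_def rx_def)
lemma radd_zero [simp]: "radd (0, 0) x = x" "radd x (0, 0) = x" by (simp_all add: radd_def)

lemma zero_arc: "a < b \<Longrightarrow> (0, 0) \<in> comp (arc a b) n"
  using arc_compI[of a b n 0 0] by simp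

lemma ry_el_arc:
  "a < b \<Longrightarrow> a < n \<longrightarrow> \<alpha> = 0 \<Longrightarrow> b < n \<longrightarrow> \<beta> = 0 \<Longrightarrow> rmul ry (el b n \<alpha> \<beta>) = el b (n - 1) \<alpha> \<beta>"
  by (rule ry_el) auto

definition f1 :: "int \<Rightarrow> int \<Rightarrow> int \<Rightarrow> relt \<Rightarrow> relt \<times> relt" where
  "f1 b d n m = (el b n (ca b n m) (cb b n m), el d n (ca b n m) (cb b n m))"
definition g1 :: "int \<Rightarrow> int \<Rightarrow> int \<Rightarrow> relt \<times> relt \<Rightarrow> relt" where
  "g1 b d n uv = el d n (ca b n (fst uv) - ca d n (snd uv)) (cb b n (fst uv) - cb d n (snd uv))"
definition f2 :: "int \<Rightarrow> int \<Rightarrow> int \<Rightarrow> relt \<Rightarrow> relt \<times> relt" where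
  "f2 c d n m = (el c n 0 (ca d n m), el d n (ca d n m) (cb d n m))"
definition g2 :: "int \<Rightarrow> int \<Rightarrow> int \<Rightarrow> int \<Rightarrow> relt \<times> relt \<Rightarrow> relt" where
  "g2 b c d n uv = el b n (ca c n (fst uv)) (cb c n (fst uv) - ca d n (snd uv))"

context
  fixes a b c d :: int
  assumes ac: "a < c" and cb: "c < b" and bd: "b < d"
begin

lemma ab: "a < b" and ad: "a < d" and cd: "c < d" using ac cb bd by auto

lemma f1_hom: "gmod_hom (arc a b) (dsum (arc c b) (arc a d)) (f1 b d)"
  unfolding gmod_hom_def
proof (intro conjI allI ballI impI)
  fix n m assume mem: "m \<in> comp (arc a b) n"
  obtain \<alpha> \<beta> where m: "m = el b n \<alpha> \<beta>" "a < n \<longrightarrow> \<alpha> = 0" "b < n \<longrightarrow> \<beta> = 0"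
    using arc_compE[OF ab mem] by metis
  show "f1 b d n m \<in> comp (dsum (arc c b) (arc a d)) n"
    using m ac cb bd by (auto simp: f1_def intro!: arc_compI)
  show "f1 b d (n + 1) (actx (arc a b) m) = actx (dsum (arc c b) (arc a d)) (f1 b d n m)"
    using m by (simp add: f1_def)
  have "rmul ry (el b n \<alpha> \<beta>) = el b (n - 1) \<alpha> \<beta>" "rmul ry (el d n \<alpha> \<beta>) = el d (n - 1) \<alpha> \<beta>"
    using m ac cb bd by (auto intro!: ry_el_arc[of a])
  then show "f1 b d (n - 1) (acty (arc a b) m) = acty (dsum (arc c b) (arc a d)) (f1 b d n m)"
    using m by (simp add: f1_def)
  fix k show "f1 b d n (gsmul (arc a b) k m) = gsmul (dsum (arc c b) (arc a d)) k (f1 b d n m)"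
    using m by (simp add: f1_def)
next
  fix n m1 m2 assume "m1 \<in> comp (arc a b) n" "m2 \<in> comp (arc a b) n"
  then show "f1 b d n (gadd (arc a b) m1 m2) = gadd (dsum (arc c b) (arc a d)) (f1 b d n m1) (f1 b d n m2)"
  proof -
    obtain \<alpha>1 \<beta>1 where 1: "m1 = el b n \<alpha>1 \<beta>1" using arc_compE[OF ab \<open>m1 \<in> _\<close>] by blast
    obtain \<alpha>2 \<beta>2 where 2: "m2 = el b n \<alpha>2 \<beta>2" using arc_compE[OF ab \<open>m2 \<in> _\<close>] by blast
    show ?thesis using 1 2 by (simp add: f1_def)
  qed
qed

lemma g1_hom: "gmod_hom (dsum (arc c b) (arc a d)) (arc c d) (g1 b d)"
  unfolding gmod_hom_def
proof (intro conjI allI ballI impI)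
  fix n uv assume mem: "uv \<in> comp (dsum (arc c b) (arc a d)) n"
  have h: "fst uv \<in> comp (arc c b) n" "snd uv \<in> comp (arc a d) n" using mem by auto
  obtain \<alpha> \<beta> where 1: "fst uv = el b n \<alpha> \<beta>" "c < n \<longrightarrow> \<alpha> = 0" "b < n \<longrightarrow> \<beta> = 0"
    using arc_compE[OF cb h(1)] by blast
  obtain \<gamma> \<delta> where 2: "snd uv = el d n \<gamma> \<delta>" "a < n \<longrightarrow> \<gamma> = 0" "d < n \<longrightarrow> \<delta> = 0"
    using arc_compE[OF ad h(2)] by blast
  have m: "uv = (el b n \<alpha> \<beta>, el d n \<gamma> \<delta>)" "c < n \<longrightarrow> \<alpha> = 0" "b < n \<longrightarrow> \<beta> = 0"
    "a < n \<longrightarrow> \<gamma> = 0" "d < n \<longrightarrow> \<delta> = 0" using 1 2 by (cases uv; simp)+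
  show "g1 b d n uv \<in> comp (arc c d) n"
    using m ac cb bd by (auto simp: g1_def intro!: arc_compI)
  show "g1 b d (n + 1) (actx (dsum (arc c b) (arc a d)) uv) = actx (arc c d) (g1 b d n uv)"
    using m by (simp add: g1_def)
  have "rmul ry (el b n \<alpha> \<beta>) = el b (n - 1) \<alpha> \<beta>"
    using m ac cb bd by (intro ry_el_arc[of c]) auto
  moreover have "rmul ry (el d n \<gamma> \<delta>) = el d (n - 1) \<gamma> \<delta>"
    using m ac cb bd by (intro ry_el_arc[of a]) auto
  moreover have "rmul ry (el d n (\<alpha> - \<gamma>) (\<beta> - \<delta>)) = el d (n - 1) (\<alpha> - \<gamma>) (\<beta> - \<delta>)"
    using m ac cb bd by (intro ry_el_arc[of c]) auto
  ultimately show "g1 b d (n - 1) (acty (dsum (arc c b) (arc a d)) uv) = acty (arc c d) (g1 b d n uv)"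
    using m by (simp add: g1_def)
  fix k show "g1 b d n (gsmul (dsum (arc c b) (arc a d)) k uv) = gsmul (arc c d) k (g1 b d n uv)"
    using m by (simp add: g1_def algebra_simps)
next
  fix n m1 m2 assume "m1 \<in> comp (dsum (arc c b) (arc a d)) n" "m2 \<in> comp (dsum (arc c b) (arc a d)) n"
  then have h: "fst m1 \<in> comp (arc c b) n" "snd m1 \<in> comp (arc a d) n"
     "fst m2 \<in> comp (arc c b) n" "snd m2 \<in> comp (arc a d) n" by auto
  obtain \<alpha>1 \<beta>1 where 1: "fst m1 = el b n \<alpha>1 \<beta>1" using arc_compE[OF cb h(1)] by blast
  obtain \<gamma>1 \<delta>1 where 2: "snd m1 = el d n \<gamma>1 \<delta>1" using arc_compE[OF ad h(2)] by blast
  obtain \<alpha>2 \<beta>2 where 3: "fst m2 = el b n \<alpha>2 \<beta>2" using arc_compE[OF cb h(3)] by blast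
  obtain \<gamma>2 \<delta>2 where 4: "snd m2 = el d n \<gamma>2 \<delta>2" using arc_compE[OF ad h(4)] by blast
  show "g1 b d n (gadd (dsum (arc c b) (arc a d)) m1 m2) = gadd (arc c d) (g1 b d n m1) (g1 b d n m2)"
    using 1 2 3 4 by (simp add: g1_def algebra_simps)
qed


lemma seq1_exact: "short_exact (arc a b) (dsum (arc c b) (arc a d)) (arc c d) (f1 b d) (g1 b d)"
  unfolding short_exact_def
proof (intro conjI allI f1_hom g1_hom)
  fix n
  show "inj_on (f1 b d n) (comp (arc a b) n)"
  proof (rule inj_onI)
    fix m1 m2 assume h: "m1 \<in> comp (arc a b) n" "m2 \<in> comp (arc a b) n" "f1 b d n m1 = f1 b d n m2"
    obtain \<alpha>1 \<beta>1 where 1: "m1 = el b n \<alpha>1 \<beta>1" using arc_compE[OF ab h(1)] by blast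
    obtain \<alpha>2 \<beta>2 where 2: "m2 = el b n \<alpha>2 \<beta>2" using arc_compE[OF ab h(2)] by blast
    show "m1 = m2" using h(3) 1 2 by (simp add: f1_def)
  qed
  show "{uv \<in> comp (dsum (arc c b) (arc a d)) n. g1 b d n uv = gzero (arc c d)} = f1 b d n ` comp (arc a b) n"
  proof
    show "{uv \<in> comp (dsum (arc c b) (arc a d)) n. g1 b d n uv = gzero (arc c d)} \<subseteq> f1 b d n ` comp (arc a b) n"
    proof
      fix uv assume "uv \<in> {uv \<in> comp (dsum (arc c b) (arc a d)) n. g1 b d n uv = gzero (arc c d)}"
      then have h: "fst uv \<in> comp (arc c b) n" "snd uv \<in> comp (arc a d) n" "g1 b d n uv = (0, 0)"
        by auto
      obtain \<alpha> \<beta> where 1: "fst uv = el b n \<alpha> \<beta>" "c < n \<longrightarrow> \<alpha> = 0" "b < n \<longrightarrow> \<beta> = 0"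
        using arc_compE[OF cb h(1)] by blast
      obtain \<gamma> \<delta> where 2: "snd uv = el d n \<gamma> \<delta>" "a < n \<longrightarrow> \<gamma> = 0" "d < n \<longrightarrow> \<delta> = 0"
        using arc_compE[OF ad h(2)] by blast
      have e: "\<alpha> = \<gamma>" "\<beta> = \<delta>" using h(3) 1 2 by (simp_all add: g1_def)
      have "el b n \<alpha> \<beta> \<in> comp (arc a b) n" using 1 2 e ab by (intro arc_compI) auto
      moreover have "uv = f1 b d n (el b n \<alpha> \<beta>)" using 1 2 e by (cases uv) (simp add: f1_def)
      ultimately show "uv \<in> f1 b d n ` comp (arc a b) n" by blast
    qed
    show "f1 b d n ` comp (arc a b) n \<subseteq> {uv \<in> comp (dsum (arc c b) (arc a d)) n. g1 b d n uv = gzero (arc c d)}"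
    proof
      fix uv assume "uv \<in> f1 b d n ` comp (arc a b) n"
      then obtain m where m: "m \<in> comp (arc a b) n" "uv = f1 b d n m" by blast
      obtain \<alpha> \<beta> where 1: "m = el b n \<alpha> \<beta>" using arc_compE[OF ab m(1)] by blast
      have "uv \<in> comp (dsum (arc c b) (arc a d)) n" using f1_hom m unfolding gmod_hom_def by blast
      moreover have "g1 b d n uv = gzero (arc c d)" using m 1 by (simp add: f1_def g1_def)
      ultimately show "uv \<in> {uv \<in> comp (dsum (arc c b) (arc a d)) n. g1 b d n uv = gzero (arc c d)}" by blast
    qed
  qed
  show "g1 b d n ` comp (dsum (arc c b) (arc a d)) n = comp (arc c d) n"
  proof
    show "g1 b d n ` comp (dsum (arc c b) (arc a d)) n \<subseteq> comp (arc c d) n"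
      using g1_hom unfolding gmod_hom_def by blast
    show "comp (arc c d) n \<subseteq> g1 b d n ` comp (dsum (arc c b) (arc a d)) n"
    proof
      fix w assume w: "w \<in> comp (arc c d) n"
      obtain \<alpha> \<beta> where 1: "w = el d n \<alpha> \<beta>" "c < n \<longrightarrow> \<alpha> = 0" "d < n \<longrightarrow> \<beta> = 0"
        using arc_compE[OF cd w] by blast
      show "w \<in> g1 b d n ` comp (dsum (arc c b) (arc a d)) n"
      proof (cases "n \<le> b")
        case True
        have "(el b n \<alpha> \<beta>, el d n 0 0) \<in> comp (dsum (arc c b) (arc a d)) n"
          using 1 True cb ad by (auto intro!: arc_compI simp del: el_zero)
        moreover have "w = g1 b d n (el b n \<alpha> \<beta>, el d n 0 0)" using 1 by (simp add: g1_def del: el_zero)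
        ultimately show ?thesis by blast
      next
        case False
        have "(el b n 0 0, el d n 0 (-\<beta>)) \<in> comp (dsum (arc c b) (arc a d)) n"
          using 1 False cb ad by (auto intro!: arc_compI simp del: el_zero)
        moreover have "w = g1 b d n (el b n 0 0, el d n 0 (-\<beta>))" using 1 False cb by (simp add: g1_def del: el_zero)
        ultimately show ?thesis by blast
      qed
    qed
  qed
qed

lemma seq1_nonsplit: "\<not> ses_splits (arc a b) (dsum (arc c b) (arc a d)) (f1 b d)"
proof
  let ?R = "dsum (arc c b) (arc a d)"
  assume "ses_splits (arc a b) ?R (f1 b d)"
  then obtain r where hom: "gmod_hom ?R (arc a b) r"
    and ret: "\<And>n m. m \<in> comp (arc a b) n \<Longrightarrow> r n (f1 b d n m) = m"
    unfolding ses_splits_def by blast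
  have rin: "\<And>n w. w \<in> comp ?R n \<Longrightarrow> r n w \<in> comp (arc a b) n"
    and radd: "\<And>n w1 w2. w1 \<in> comp ?R n \<Longrightarrow> w2 \<in> comp ?R n \<Longrightarrow> r n (gadd ?R w1 w2) = radd (r n w1) (r n w2)"
    and rx: "\<And>n w. w \<in> comp ?R n \<Longrightarrow> r (n + 1) (actx ?R w) = rmul rx (r n w)"
    and ry: "\<And>n w. w \<in> comp ?R n \<Longrightarrow> r (n - 1) (acty ?R w) = rmul ry (r n w)"
    using hom unfolding gmod_hom_def by auto
  have z0: "(0::complex poly, 0::complex poly) \<in> comp (arc c b) n" for n
    using arc_compI[OF cb, of n 0 0] by simp
  have A: "r (d - int k) ((0, 0), el d (d - int k) 0 1) = (0, 0)" for k
  proof (induction k)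
    case 0
    have "((0, 0), el d d 0 1) \<in> comp ?R d" using z0 ad by (auto intro!: arc_compI)
    from rin[OF this] obtain \<alpha> \<beta> where "r d ((0, 0), el d d 0 1) = el b d \<alpha> \<beta>" "a < d \<longrightarrow> \<alpha> = 0" "b < d \<longrightarrow> \<beta> = 0"
      using arc_compE[OF ab] by blast
    then show ?case using ad bd by simp
  next
    case (Suc k)
    have mem: "((0, 0), el d (d - int k) 0 1) \<in> comp ?R (d - int k)" using z0 ad by (auto intro!: arc_compI)
    have "acty ?R ((0, 0), el d (d - int k) 0 1) = ((0, 0), el d (d - int k - 1) 0 1)"
      by (simp add: ry_el)
    then have "r (d - int k - 1) ((0, 0), el d (d - int k - 1) 0 1) = rmul ry (0, 0)"
      using ry[OF mem] Suc.IH by simp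
    then show ?case by (simp add: algebra_simps)
  qed
  have "d - int (nat (d - a - 1)) = a + 1" using ad by simp
  then have A': "r (a + 1) ((0, 0), el d (a + 1) 0 1) = (0, 0)" using A[of "nat (d - a - 1)"] by simp
  define v where "v = ((0::complex poly, 0::complex poly), el d a 1 0)"
  have vmem: "v \<in> comp ?R a" unfolding v_def using z0 ad by (auto intro!: arc_compI)
  obtain P Q where PQ: "r a v = el b a P Q" using arc_compE[OF ab rin[OF vmem]] by blast
  have "actx ?R v = ((0, 0), el d (a + 1) 0 1)" by (simp add: v_def)
  then have "el b (a + 1) 0 P = (0, 0)" using rx[OF vmem] A' PQ by simp
  then have P0: "P = 0" by simp
  define u where "u = (el b (a + 1) 1 0, (0::complex poly, 0::complex poly))"
  have umem: "u \<in> comp ?R (a + 1)" unfolding u_def using ac cb ad zero_arc[OF ad]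
    by (auto intro!: arc_compI)
  obtain \<beta>' where B: "r (a + 1) u = el b (a + 1) 0 \<beta>'"
    using arc_compE[OF ab rin[OF umem]] by (metis less_add_one)
  have yu: "acty ?R u = (el b a 1 0, (0, 0))" unfolding u_def using ac cb by (simp add: ry_el)
  have "r a (acty ?R u) = el b a 0 \<beta>'" using ry[OF umem] B ab by (simp add: ry_el)
  have yumem: "acty ?R u \<in> comp ?R a" unfolding yu using ac cb zero_arc[OF ad]
    by (auto intro!: arc_compI)
  have "el b a 1 0 \<in> comp (arc a b) a" using ab by (intro arc_compI) auto
  then have "r a (f1 b d a (el b a 1 0)) = el b a 1 0" by (rule ret)
  moreover have "f1 b d a (el b a 1 0) = gadd ?R (acty ?R u) v"
    unfolding yu v_def by (simp add: f1_def del: el_zero add: el_zero[symmetric])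
  ultimately have "radd (r a (acty ?R u)) (r a v) = el b a 1 0" using radd[OF yumem vmem] by simp
  then show False using \<open>r a (acty ?R u) = el b a 0 \<beta>'\<close> PQ P0 by simp
qed


lemma f2_hom: "gmod_hom (arc c d) (dsum (arc a c) (arc b d)) (f2 c d)"
  unfolding gmod_hom_def
proof (intro conjI allI ballI impI)
  fix n m assume mem: "m \<in> comp (arc c d) n"
  obtain \<alpha> \<beta> where m: "m = el d n \<alpha> \<beta>" "c < n \<longrightarrow> \<alpha> = 0" "d < n \<longrightarrow> \<beta> = 0"
    using arc_compE[OF cd mem] by metis
  show "f2 c d n m \<in> comp (dsum (arc a c) (arc b d)) n"
    using m ac cb bd by (auto simp: f2_def intro!: arc_compI)
  show "f2 c d (n + 1) (actx (arc c d) m) = actx (dsum (arc a c) (arc b d)) (f2 c d n m)"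
    using m by (simp add: f2_def)
  have "rmul ry (el d n \<alpha> \<beta>) = el d (n - 1) \<alpha> \<beta>"
    using m ac cb bd by (intro ry_el_arc[of c]) auto
  moreover have "rmul ry (el c n 0 \<alpha>) = el c (n - 1) 0 \<alpha>"
    using m ac cb bd by (intro ry_el_arc[of a]) auto
  ultimately show "f2 c d (n - 1) (acty (arc c d) m) = acty (dsum (arc a c) (arc b d)) (f2 c d n m)"
    using m by (simp add: f2_def)
  fix k show "f2 c d n (gsmul (arc c d) k m) = gsmul (dsum (arc a c) (arc b d)) k (f2 c d n m)"
    using m by (simp add: f2_def)
next
  fix n m1 m2 assume "m1 \<in> comp (arc c d) n" "m2 \<in> comp (arc c d) n"
  then show "f2 c d n (gadd (arc c d) m1 m2) = gadd (dsum (arc a c) (arc b d)) (f2 c d n m1) (f2 c d n m2)"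
  proof -
    obtain \<alpha>1 \<beta>1 where 1: "m1 = el d n \<alpha>1 \<beta>1" using arc_compE[OF cd \<open>m1 \<in> _\<close>] by blast
    obtain \<alpha>2 \<beta>2 where 2: "m2 = el d n \<alpha>2 \<beta>2" using arc_compE[OF cd \<open>m2 \<in> _\<close>] by blast
    show ?thesis using 1 2 by (simp add: f2_def)
  qed
qed

lemma g2_hom: "gmod_hom (dsum (arc a c) (arc b d)) (arc a b) (g2 b c d)"
  unfolding gmod_hom_def
proof (intro conjI allI ballI impI)
  fix n uv assume mem: "uv \<in> comp (dsum (arc a c) (arc b d)) n"
  have h: "fst uv \<in> comp (arc a c) n" "snd uv \<in> comp (arc b d) n" using mem by auto
  obtain \<alpha> \<beta> where 1: "fst uv = el c n \<alpha> \<beta>" "a < n \<longrightarrow> \<alpha> = 0" "c < n \<longrightarrow> \<beta> = 0"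
    using arc_compE[OF ac h(1)] by blast
  obtain \<gamma> \<delta> where 2: "snd uv = el d n \<gamma> \<delta>" "b < n \<longrightarrow> \<gamma> = 0" "d < n \<longrightarrow> \<delta> = 0"
    using arc_compE[OF bd h(2)] by blast
  have m: "uv = (el c n \<alpha> \<beta>, el d n \<gamma> \<delta>)" "a < n \<longrightarrow> \<alpha> = 0" "c < n \<longrightarrow> \<beta> = 0"
    "b < n \<longrightarrow> \<gamma> = 0" "d < n \<longrightarrow> \<delta> = 0" using 1 2 by (cases uv; simp)+
  show "g2 b c d n uv \<in> comp (arc a b) n"
    using m ac cb bd by (auto simp: g2_def intro!: arc_compI)
  show "g2 b c d (n + 1) (actx (dsum (arc a c) (arc b d)) uv) = actx (arc a b) (g2 b c d n uv)"
    using m by (simp add: g2_def)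
  have "rmul ry (el c n \<alpha> \<beta>) = el c (n - 1) \<alpha> \<beta>"
    using m ac cb bd by (intro ry_el_arc[of a]) auto
  moreover have "rmul ry (el d n \<gamma> \<delta>) = el d (n - 1) \<gamma> \<delta>"
    using m ac cb bd by (intro ry_el_arc[of b]) auto
  moreover have "rmul ry (el b n \<alpha> (\<beta> - \<gamma>)) = el b (n - 1) \<alpha> (\<beta> - \<gamma>)"
    using m ac cb bd by (intro ry_el_arc[of a]) auto
  ultimately show "g2 b c d (n - 1) (acty (dsum (arc a c) (arc b d)) uv) = acty (arc a b) (g2 b c d n uv)"
    using m by (simp add: g2_def)
  fix k show "g2 b c d n (gsmul (dsum (arc a c) (arc b d)) k uv) = gsmul (arc a b) k (g2 b c d n uv)"
    using m by (simp add: g2_def algebra_simps)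
next
  fix n m1 m2 assume "m1 \<in> comp (dsum (arc a c) (arc b d)) n" "m2 \<in> comp (dsum (arc a c) (arc b d)) n"
  then have h: "fst m1 \<in> comp (arc a c) n" "snd m1 \<in> comp (arc b d) n"
     "fst m2 \<in> comp (arc a c) n" "snd m2 \<in> comp (arc b d) n" by auto
  obtain \<alpha>1 \<beta>1 where 1: "fst m1 = el c n \<alpha>1 \<beta>1" using arc_compE[OF ac h(1)] by blast
  obtain \<gamma>1 \<delta>1 where 2: "snd m1 = el d n \<gamma>1 \<delta>1" using arc_compE[OF bd h(2)] by blast
  obtain \<alpha>2 \<beta>2 where 3: "fst m2 = el c n \<alpha>2 \<beta>2" using arc_compE[OF ac h(3)] by blast
  obtain \<gamma>2 \<delta>2 where 4: "snd m2 = el d n \<gamma>2 \<delta>2" using arc_compE[OF bd h(4)] by blast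
  show "g2 b c d n (gadd (dsum (arc a c) (arc b d)) m1 m2) = gadd (arc a b) (g2 b c d n m1) (g2 b c d n m2)"
    using 1 2 3 4 by (simp add: g2_def algebra_simps)
qed

lemma seq2_exact: "short_exact (arc c d) (dsum (arc a c) (arc b d)) (arc a b) (f2 c d) (g2 b c d)"
  unfolding short_exact_def
proof (intro conjI allI f2_hom g2_hom)
  fix n
  show "inj_on (f2 c d n) (comp (arc c d) n)"
  proof (rule inj_onI)
    fix m1 m2 assume h: "m1 \<in> comp (arc c d) n" "m2 \<in> comp (arc c d) n" "f2 c d n m1 = f2 c d n m2"
    obtain \<alpha>1 \<beta>1 where 1: "m1 = el d n \<alpha>1 \<beta>1" using arc_compE[OF cd h(1)] by blast
    obtain \<alpha>2 \<beta>2 where 2: "m2 = el d n \<alpha>2 \<beta>2" using arc_compE[OF cd h(2)] by blast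
    show "m1 = m2" using h(3) 1 2 by (simp add: f2_def)
  qed
  show "{uv \<in> comp (dsum (arc a c) (arc b d)) n. g2 b c d n uv = gzero (arc a b)} = f2 c d n ` comp (arc c d) n"
  proof
    show "{uv \<in> comp (dsum (arc a c) (arc b d)) n. g2 b c d n uv = gzero (arc a b)} \<subseteq> f2 c d n ` comp (arc c d) n"
    proof
      fix uv assume "uv \<in> {uv \<in> comp (dsum (arc a c) (arc b d)) n. g2 b c d n uv = gzero (arc a b)}"
      then have h: "fst uv \<in> comp (arc a c) n" "snd uv \<in> comp (arc b d) n" "g2 b c d n uv = (0, 0)"
        by auto
      obtain \<alpha> \<beta> where 1: "fst uv = el c n \<alpha> \<beta>" "a < n \<longrightarrow> \<alpha> = 0" "c < n \<longrightarrow> \<beta> = 0"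
        using arc_compE[OF ac h(1)] by blast
      obtain \<gamma> \<delta> where 2: "snd uv = el d n \<gamma> \<delta>" "b < n \<longrightarrow> \<gamma> = 0" "d < n \<longrightarrow> \<delta> = 0"
        using arc_compE[OF bd h(2)] by blast
      have e: "\<alpha> = 0" "\<beta> = \<gamma>" using h(3) 1 2 by (simp_all add: g2_def)
      have "el d n \<gamma> \<delta> \<in> comp (arc c d) n" using 1 2 e cd by (intro arc_compI) auto
      moreover have "uv = f2 c d n (el d n \<gamma> \<delta>)" using 1 2 e by (cases uv) (simp add: f2_def)
      ultimately show "uv \<in> f2 c d n ` comp (arc c d) n" by blast
    qed
    show "f2 c d n ` comp (arc c d) n \<subseteq> {uv \<in> comp (dsum (arc a c) (arc b d)) n. g2 b c d n uv = gzero (arc a b)}"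
    proof
      fix uv assume "uv \<in> f2 c d n ` comp (arc c d) n"
      then obtain m where m: "m \<in> comp (arc c d) n" "uv = f2 c d n m" by blast
      obtain \<alpha> \<beta> where 1: "m = el d n \<alpha> \<beta>" using arc_compE[OF cd m(1)] by blast
      have "uv \<in> comp (dsum (arc a c) (arc b d)) n" using f2_hom m unfolding gmod_hom_def by blast
      moreover have "g2 b c d n uv = gzero (arc a b)" using m 1 by (simp add: f2_def g2_def)
      ultimately show "uv \<in> {uv \<in> comp (dsum (arc a c) (arc b d)) n. g2 b c d n uv = gzero (arc a b)}" by blast
    qed
  qed
  show "g2 b c d n ` comp (dsum (arc a c) (arc b d)) n = comp (arc a b) n"
  proof
    show "g2 b c d n ` comp (dsum (arc a c) (arc b d)) n \<subseteq> comp (arc a b) n"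
      using g2_hom unfolding gmod_hom_def by blast
    show "comp (arc a b) n \<subseteq> g2 b c d n ` comp (dsum (arc a c) (arc b d)) n"
    proof
      fix w assume w: "w \<in> comp (arc a b) n"
      obtain \<alpha> \<beta> where 1: "w = el b n \<alpha> \<beta>" "a < n \<longrightarrow> \<alpha> = 0" "b < n \<longrightarrow> \<beta> = 0"
        using arc_compE[OF ab w] by blast
      have "(el c n \<alpha> 0, el d n (-\<beta>) 0) \<in> comp (dsum (arc a c) (arc b d)) n"
        using 1 ac bd by (auto intro!: arc_compI simp del: el_zero)
      moreover have "w = g2 b c d n (el c n \<alpha> 0, el d n (-\<beta>) 0)" using 1 by (simp add: g2_def del: el_zero)
      ultimately show "w \<in> g2 b c d n ` comp (dsum (arc a c) (arc b d)) n" by blast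
    qed
  qed
qed

lemma seq2_nonsplit: "\<not> ses_splits (arc c d) (dsum (arc a c) (arc b d)) (f2 c d)"
proof
  let ?R = "dsum (arc a c) (arc b d)"
  assume "ses_splits (arc c d) ?R (f2 c d)"
  then obtain r where hom: "gmod_hom ?R (arc c d) r"
    and ret: "\<And>n m. m \<in> comp (arc c d) n \<Longrightarrow> r n (f2 c d n m) = m"
    unfolding ses_splits_def by blast
  have rin: "\<And>n w. w \<in> comp ?R n \<Longrightarrow> r n w \<in> comp (arc c d) n"
    and radd: "\<And>n w1 w2. w1 \<in> comp ?R n \<Longrightarrow> w2 \<in> comp ?R n \<Longrightarrow> r n (gadd ?R w1 w2) = radd (r n w1) (r n w2)"
    and rsm: "\<And>n k w. w \<in> comp ?R n \<Longrightarrow> r n (gsmul ?R k w) = rsmul k (r n w)"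
    and rx: "\<And>n w. w \<in> comp ?R n \<Longrightarrow> r (n + 1) (actx ?R w) = rmul rx (r n w)"
    and ry: "\<And>n w. w \<in> comp ?R n \<Longrightarrow> r (n - 1) (acty ?R w) = rmul ry (r n w)"
    using hom unfolding gmod_hom_def by auto
  have zmem: "((0, 0), (0, 0)) \<in> comp ?R n" for n using zero_arc[OF ac] zero_arc[OF bd] by simp
  have Z: "r n ((0, 0), (0, 0)) = (0, 0)" for n
    using rsm[OF zmem, of n 0] by (simp add: rsmul_def)
  define u where "u = (el c c 0 1, (0::complex poly, 0::complex poly))"
  have umem: "u \<in> comp ?R c" unfolding u_def using ac zero_arc[OF bd]
    by (auto intro!: arc_compI)
  obtain P Q where PQ: "r c u = el d c P Q" using arc_compE[OF cd rin[OF umem]] by blast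
  have "actx ?R u = ((0, 0), (0, 0))" by (simp add: u_def)
  then have "el d (c + 1) 0 P = (0, 0)" using rx[OF umem] Z PQ by simp
  then have P0: "P = 0" by simp
  define w where "w = ((0::complex poly, 0::complex poly), el d (c + 1) 1 0)"
  have wmem: "w \<in> comp ?R (c + 1)" unfolding w_def using ac cb bd zero_arc[OF ac]
    by (auto intro!: arc_compI)
  obtain \<beta>' where B: "r (c + 1) w = el d (c + 1) 0 \<beta>'"
    using arc_compE[OF cd rin[OF wmem]] by (metis less_add_one)
  have yw: "acty ?R w = ((0, 0), el d c 1 0)" unfolding w_def using cb bd by (simp add: ry_el)
  have ryw: "r c (acty ?R w) = el d c 0 \<beta>'" using ry[OF wmem] B cd by (simp add: ry_el)
  have ywmem: "acty ?R w \<in> comp ?R c" unfolding yw using cb bd zero_arc[OF ac]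
    by (auto intro!: arc_compI)
  have "el d c 1 0 \<in> comp (arc c d) c" using cd by (intro arc_compI) auto
  then have "r c (f2 c d c (el d c 1 0)) = el d c 1 0" by (rule ret)
  moreover have "f2 c d c (el d c 1 0) = gadd ?R u (acty ?R w)"
    unfolding yw u_def by (simp add: f2_def)
  ultimately have "radd (r c u) (r c (acty ?R w)) = el d c 1 0" using radd[OF umem ywmem] by simp
  then show False using ryw PQ P0 by simp
qed

end

theorem lemma4p4:
  fixes a b c d :: int
  assumes "a < c" and "c < b" and "b < d"
  shows "(\<exists>f g. short_exact (arc a b) (dsum (arc c b) (arc a d)) (arc c d) f g
              \<and> \<not> ses_splits (arc a b) (dsum (arc c b) (arc a d)) f)
       \<and> (\<exists>f' g'. short_exact (arc c d) (dsum (arc a c) (arc b d)) (arc a b) f' g'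
              \<and> \<not> ses_splits (arc c d) (dsum (arc a c) (arc b d)) f')"
  using seq1_exact[OF assms] seq1_nonsplit[OF assms] seq2_exact[OF assms] seq2_nonsplit[OF assms]
  by blast

end
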